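(* Let $\Omega\subseteq\mathbb{R}^2$ be a compact Borel set, $\rho\in\mathbb{N}$, and for each $i\in\{1,\dots,\rho\}$ let $P_i$ be a dimensional facility with root point $p_i$. Let $\Omega_i=\{q\in\mathbb{R}^2:P_i^q\subseteq\Omega\}$ and $$\Gamma=\{(q_1,\dots,q_\rho)\in\Omega_1\times\dots\times\Omega_\rho:\ \operatorname{int}(P_i^{q_i})\cap\operatorname{int}(P_j^{q_j})=\emptyset\ \text{for all } i,j\in\{1,\dots,\rho\},\ i\neq j\}.$$ Then $\Gamma$ is a compact subset of $\mathbb{R}^{2\rho}$.
   Context: A dimensional facility is a compact set $P\subseteq\mathbb{R}^2$ that is the closure of a nonempty open connected set; each $P_i$ has a distinguished root point $p_i\in P_i$, and for $q\in\mathbb{R}^2$, $P_i^{q}:=P_i+(q-p_i)$ denotes the translate of $P_i$ whose root point is at $q$. *)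

theory Defs
  imports "HOL-Analysis.Analysis"
begin

definition dimensional_facility :: "(real^2) set \<Rightarrow> bool" where
  "dimensional_facility P \<longleftrightarrow> compact P \<and>
     (\<exists>U. open U \<and> connected U \<and> U \<noteq> {} \<and> P = closure U)"

text \<open>Translate of facility P with root point p so that the root lies at q.\<close>
definition placed :: "(real^2) set \<Rightarrow> real^2 \<Rightarrow> real^2 \<Rightarrow> (real^2) set" where
  "placed P p q = (\<lambda>x. x + (q - p)) ` P"

end

theory Submission
  imports Defs
begin

lemma placed_interior: "interior (placed P p q) = placed (interior P) p q"
proof -
  have "placed P p q = (+) (q - p) ` P" unfolding placed_def by (auto simp: add.commute)
  moreover have "placed (interior P) p q = (+) (q - p) ` interior P" unfolding placed_def by (auto simp: add.commute)
  ultimately show ?thesis by (simp add: interior_translation)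
qed

lemma mem_placed: "x \<in> placed S p q \<longleftrightarrow> x - (q - p) \<in> S"
  unfolding placed_def by (auto intro: image_eqI[where x="x - (q - p)"])

lemma bounded_vec_set:
  assumes "bounded (S :: (real^2) set)"
  shows "bounded {q :: (real^2)^'n. \<forall>i. q $ i \<in> S}"
proof -
  obtain B where B: "\<And>x. x \<in> S \<Longrightarrow> norm x \<le> B" using assms bounded_iff by blast
  have "norm q \<le> real CARD('n) * B" if "\<forall>i. q $ i \<in> S" for q :: "(real^2)^'n"
  proof -
    have "norm q \<le> (\<Sum>i\<in>UNIV. norm (q $ i))"
      unfolding norm_vec_def by (rule L2_set_le_sum) auto
    also have "\<dots> \<le> (\<Sum>i\<in>(UNIV::'n set). B)" by (rule sum_mono) (use that B in auto)
    finally show ?thesis by simp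
  qed
  then show ?thesis unfolding bounded_iff by blast
qed

theorem lemma2:
  fixes \<Omega> :: "(real^2) set"
    and P :: "'n::finite \<Rightarrow> (real^2) set"
    and p :: "'n \<Rightarrow> real^2"
  assumes "compact \<Omega>" and "\<Omega> \<in> sets borel"
    and "\<And>i. dimensional_facility (P i)"
    and "\<And>i. p i \<in> P i"
  shows "compact {q :: (real^2)^'n.
            (\<forall>i. placed (P i) (p i) (q $ i) \<subseteq> \<Omega>) \<and>
            (\<forall>i j. i \<noteq> j \<longrightarrow>
               interior (placed (P i) (p i) (q $ i)) \<inter> interior (placed (P j) (p j) (q $ j)) = {})}"
    (is "compact ?S")
  unfolding compact_eq_bounded_closed
proof (rule conjI)
  have cl: "closed \<Omega>" using assms(1) compact_imp_closed by blast
  have "?S \<subseteq> {q. \<forall>i. q $ i \<in> \<Omega>}"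
  proof safe
    fix q :: "(real^2)^'n" and i
    assume "\<forall>i. placed (P i) (p i) (q $ i) \<subseteq> \<Omega>"
    moreover have "q $ i \<in> placed (P i) (p i) (q $ i)" using assms(4)[of i] by (simp add: mem_placed)
    ultimately show "q $ i \<in> \<Omega>" by blast
  qed
  then show "bounded ?S"
    by (rule bounded_subset[OF bounded_vec_set[OF compact_imp_bounded[OF assms(1)]]])
  have eq: "?S = {q. (\<forall>i. \<forall>x. x \<in> P i \<longrightarrow> x + (q $ i - p i) \<in> \<Omega>) \<and>
     (\<forall>i j x. i \<noteq> j \<longrightarrow> \<not> (x - (q $ i - p i) \<in> interior (P i) \<and> x - (q $ j - p j) \<in> interior (P j)))}"
    unfolding placed_interior disjoint_iff subset_iff mem_placed by (auto, metis add_diff_cancel, force)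
  have c1: "closed {q :: (real^2)^'n. x + (q $ i - p i) \<in> \<Omega>}" for x i
    by (rule closed_vimage[OF cl, unfolded vimage_def]) (intro continuous_intros)
  have o1: "open {q :: (real^2)^'n. x - (q $ i - p i) \<in> interior (P i)}" for x i
    by (rule open_vimage[OF open_interior, unfolded vimage_def]) (intro continuous_intros)
  show "closed ?S" unfolding eq
    by (intro closed_Collect_conj closed_Collect_all closed_Collect_imp closed_Collect_neg
        open_Collect_conj c1 o1 closed_Collect_const open_Collect_const)
qed

end
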